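(* Let $(G,f)\in\mathcal C$ with $|V(G)|=\aleph_1$. If $P$ is a hereditary property such that $P(G,f)$ holds and $(G,f)$ is not $P$-destructed, then $G$ possesses a perfect $f$-factor.
   Context: A graph is $G=(V,E)$ with $V$ a nonempty set and $E\subseteq\{e\subseteq V:|e|=2\}$. For $F\subseteq E$ and $x\in V$, $d_F(x)$ is the cardinal $|\{e\in F:x\in e\}|$. For $f:V\to$ Cardinals, an $f$-factor of $G$ is $F\subseteq E$ with $d_F(x)\le f(x)$ for all $x$; it is perfect if $d_F(x)=f(x)$ for all $x$; $f^{-1}(\lambda)=\{x\in V:f(x)=\lambda\}$. $\mathcal C$ is the class of all pairs $(G,f)$ with $G=(V,E)$ a graph, $f:V\to$ Cardinals, and $f(x)\le d_E(x)$ for all $x\in V$. A property $P$ is a class of pairs; $P(G,f)$ (also "$(G,f)$ fulfills $P$") means that $(G,f)\in\mathcal C$ and $(G,f)$ has property $P$. For $x,y\in V$, $G-\{x,y\}$ denotes $(V,E\setminus\{\{x,y\}\})$, and $f_{x,y}(v)=f(v)-1$ if $v\in\{x,y\}$ and $1\le f(v)<\aleph_0$, $f_{x,y}(v)=f(v)$ otherwise. $P$ is hereditary if for every $(G,f)$ with $P(G,f)$ and every $x\in V(G)$ with $f(x)>0$ there is $y\in V(G)$ with $f(y)>0$, $\{x,y\}\in E(G)$ and $P(G-\{x,y\},f_{x,y})$. Destructions: let $(G,f)\in\mathcal C$, $G=(V,E)$, $|V|=\kappa^+$ for an infinite cardinal $\kappa$. Let $(A_\alpha)_{\alpha<\kappa^+}$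 be an increasing continuous sequence (i.e. $A_\lambda=\bigcup_{\alpha<\lambda}A_\alpha$ for limit $\lambda$) of subsets of $V$ with $|A_\alpha|<\kappa^+$ for all $\alpha$ and $V=\bigcup_{\alpha<\kappa^+}A_\alpha$. For $\alpha<\kappa^+$ put $V_\alpha=(V\setminus A_\alpha)\cup f^{-1}(\kappa^+)$, $E_\alpha=\{\{x,y\}\in E: x\in V_\alpha,\ y\in V\setminus A_\alpha\}$, $G_\alpha=(V_\alpha,E_\alpha)$, $f_\alpha=f\restriction V_\alpha$. For a property $P$, $(A_\alpha)_{\alpha<\kappa^+}$ is a $P$-destruction of $(G,f)$ if $S=\{\alpha<\kappa^+: P(G_\alpha,f_\alpha)\text{ fails}\}$ is stationary in $\kappa^+$; $(G,f)$ is $P$-destructed if some such sequence is a $P$-destruction of $(G,f)$. *)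

theory Defs
  imports Main "HOL-Library.Countable_Set"
begin

text \<open>Every cardinal relevant to a pair (G,f) in C with |V(G)| = aleph_1 is at most
  aleph_1 (f(x) <= d_E(x) <= |E| <= aleph_1).  We represent such cardinals by a datatype.\<close>

datatype cval = CFin nat | CAleph0 | CAleph1

text \<open>The well order aleph_1 (on its field), from the library's successor cardinal.\<close>
abbreviation omega1 :: "nat set rel" where
  "omega1 \<equiv> cardSuc natLeq"

definition cv_eq :: "cval \<Rightarrow> 'b set \<Rightarrow> bool" where
  "cv_eq c A = (case c of
      CFin n \<Rightarrow> finite A \<and> card A = n
    | CAleph0 \<Rightarrow> infinite A \<and> countable A
    | CAleph1 \<Rightarrow> (card_of A, omega1) \<in> ordIso)"

definition cv_le :: "cval \<Rightarrow> 'b set \<Rightarrow> bool" where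
  "cv_le c A = (case c of
      CFin n \<Rightarrow> infinite A \<or> n \<le> card A
    | CAleph0 \<Rightarrow> infinite A
    | CAleph1 \<Rightarrow> uncountable A)"

definition cv_ge :: "cval \<Rightarrow> 'b set \<Rightarrow> bool" where
  "cv_ge c A = (case c of
      CFin n \<Rightarrow> finite A \<and> card A \<le> n
    | CAleph0 \<Rightarrow> countable A
    | CAleph1 \<Rightarrow> (card_of A, omega1) \<in> ordLeq)"

definition graph :: "'a set \<Rightarrow> 'a set set \<Rightarrow> bool" where
  "graph V E \<longleftrightarrow> V \<noteq> {} \<and> (\<forall>e\<in>E. e \<subseteq> V \<and> card e = 2)"

definition inc :: "'a set set \<Rightarrow> 'a \<Rightarrow> 'a set set" where
  "inc F x = {e \<in> F. x \<in> e}"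

definition f_factor :: "'a set \<Rightarrow> 'a set set \<Rightarrow> ('a \<Rightarrow> cval) \<Rightarrow> 'a set set \<Rightarrow> bool" where
  "f_factor V E f F \<longleftrightarrow> F \<subseteq> E \<and> (\<forall>x\<in>V. cv_ge (f x) (inc F x))"

definition perfect_f_factor :: "'a set \<Rightarrow> 'a set set \<Rightarrow> ('a \<Rightarrow> cval) \<Rightarrow> 'a set set \<Rightarrow> bool" where
  "perfect_f_factor V E f F \<longleftrightarrow> f_factor V E f F \<and> (\<forall>x\<in>V. cv_eq (f x) (inc F x))"

text \<open>The class C.  A function V -> Cardinals is represented by a total function that is
  extensional (value 0 outside V).\<close>
definition inC :: "'a set \<Rightarrow> 'a set set \<Rightarrow> ('a \<Rightarrow> cval) \<Rightarrow> bool" where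
  "inC V E f \<longleftrightarrow> graph V E \<and> (\<forall>x. x \<notin> V \<longrightarrow> f x = CFin 0)
     \<and> (\<forall>x\<in>V. cv_le (f x) (inc E x))"

text \<open>P(G,f): (G,f) in C and (G,f) has property P\<close>
definition holds :: "('a set \<Rightarrow> 'a set set \<Rightarrow> ('a \<Rightarrow> cval) \<Rightarrow> bool)
    \<Rightarrow> 'a set \<Rightarrow> 'a set set \<Rightarrow> ('a \<Rightarrow> cval) \<Rightarrow> bool" where
  "holds P V E f \<longleftrightarrow> inC V E f \<and> P V E f"

definition cdec :: "cval \<Rightarrow> cval" where
  "cdec c = (case c of CFin (Suc n) \<Rightarrow> CFin n | _ \<Rightarrow> c)"

definition fxy :: "('a \<Rightarrow> cval) \<Rightarrow> 'a \<Rightarrow> 'a \<Rightarrow> 'a \<Rightarrow> cval" where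
  "fxy f x y = (\<lambda>v. if v \<in> {x, y} then cdec (f v) else f v)"

definition hereditary :: "('a set \<Rightarrow> 'a set set \<Rightarrow> ('a \<Rightarrow> cval) \<Rightarrow> bool) \<Rightarrow> bool" where
  "hereditary P \<longleftrightarrow> (\<forall>V E f x. holds P V E f \<and> x \<in> V \<and> f x \<noteq> CFin 0 \<longrightarrow>
      (\<exists>y\<in>V. f y \<noteq> CFin 0 \<and> {x, y} \<in> E \<and> holds P V (E - {{x, y}}) (fxy f x y)))"

definition olt :: "nat set \<Rightarrow> nat set \<Rightarrow> bool" where
  "olt a b \<longleftrightarrow> (a, b) \<in> omega1 \<and> a \<noteq> b"

definition is_limit :: "nat set \<Rightarrow> bool" where
  "is_limit l \<longleftrightarrow> l \<in> Field omega1 \<and> (\<exists>a. olt a l) \<and> (\<forall>a. olt a l \<longrightarrow> (\<exists>b. olt a b \<and> olt b l))"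

definition club :: "nat set set \<Rightarrow> bool" where
  "club C \<longleftrightarrow> C \<subseteq> Field omega1
     \<and> (\<forall>a\<in>Field omega1. \<exists>b\<in>C. olt a b)
     \<and> (\<forall>l. is_limit l \<and> (\<forall>a. olt a l \<longrightarrow> (\<exists>b\<in>C. olt a b \<and> olt b l)) \<longrightarrow> l \<in> C)"

definition stationary :: "nat set set \<Rightarrow> bool" where
  "stationary S \<longleftrightarrow> S \<subseteq> Field omega1 \<and> (\<forall>C. club C \<longrightarrow> S \<inter> C \<noteq> {})"

section \<open>Destructions (kappa = aleph_0, kappa^+ = aleph_1)\<close>

definition filtration :: "'a set \<Rightarrow> (nat set \<Rightarrow> 'a set) \<Rightarrow> bool" where
  "filtration V A \<longleftrightarrow>
     (\<forall>a b. (a, b) \<in> omega1 \<longrightarrow> A a \<subseteq> A b)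
   \<and> (\<forall>l. is_limit l \<longrightarrow> A l = (\<Union>b\<in>{b. olt b l}. A b))
   \<and> (\<forall>a\<in>Field omega1. countable (A a))
   \<and> V = (\<Union>a\<in>Field omega1. A a)"

definition V_al :: "'a set \<Rightarrow> ('a \<Rightarrow> cval) \<Rightarrow> (nat set \<Rightarrow> 'a set) \<Rightarrow> nat set \<Rightarrow> 'a set" where
  "V_al V f A a = (V - A a) \<union> {x\<in>V. f x = CAleph1}"

definition E_al :: "'a set \<Rightarrow> 'a set set \<Rightarrow> ('a \<Rightarrow> cval) \<Rightarrow> (nat set \<Rightarrow> 'a set) \<Rightarrow> nat set \<Rightarrow> 'a set set" where
  "E_al V E f A a = {e\<in>E. \<exists>x y. e = {x, y} \<and> x \<in> V_al V f A a \<and> y \<in> V - A a}"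

definition f_al :: "'a set \<Rightarrow> ('a \<Rightarrow> cval) \<Rightarrow> (nat set \<Rightarrow> 'a set) \<Rightarrow> nat set \<Rightarrow> 'a \<Rightarrow> cval" where
  "f_al V f A a = (\<lambda>x. if x \<in> V_al V f A a then f x else CFin 0)"

definition destruction :: "('a set \<Rightarrow> 'a set set \<Rightarrow> ('a \<Rightarrow> cval) \<Rightarrow> bool)
    \<Rightarrow> 'a set \<Rightarrow> 'a set set \<Rightarrow> ('a \<Rightarrow> cval) \<Rightarrow> (nat set \<Rightarrow> 'a set) \<Rightarrow> bool" where
  "destruction P V E f A \<longleftrightarrow> filtration V A \<and>
     stationary {a \<in> Field omega1. \<not> holds P (V_al V f A a) (E_al V E f A a) (f_al V f A a)}"

definition destructed :: "('a set \<Rightarrow> 'a set set \<Rightarrow> ('a \<Rightarrow> cval) \<Rightarrow> bool)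
    \<Rightarrow> 'a set \<Rightarrow> 'a set set \<Rightarrow> ('a \<Rightarrow> cval) \<Rightarrow> bool" where
  "destructed P V E f \<longleftrightarrow> (\<exists>A. destruction P V E f A)"

end

theory Submission
  imports Defs "HOL-Library.Countable_Set_Type"
begin

unbundle cardinal_syntax




lemma W_card: "Card_order omega1"
  by (simp add: cardSuc_Card_order natLeq_Card_order)

lemma W_wo: "Well_order omega1"
  using W_card card_order_on_def by blast

lemma W_wo_rel: "wo_rel omega1"
  using W_wo wo_rel_def by blast

lemma olt_underS: "olt a b \<longleftrightarrow> a \<in> underS omega1 b"
  unfolding olt_def underS_def by auto

lemma countable_underS: "countable {a. olt a b}"
proof (cases "b \<in> Field omega1")
  case True
  have "|underS omega1 b| <o omega1" using card_of_underS[OF W_card True] .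
  hence "|underS omega1 b| \<le>o natLeq"
    using cardSuc_ordLeq_ordLess[OF natLeq_Card_order card_of_Card_order] by blast
  hence "countable (underS omega1 b)" using countable_card_le_natLeq by blast
  moreover have "{a. olt a b} = underS omega1 b" using olt_underS by blast
  ultimately show ?thesis by simp
next
  case False
  hence "{a. olt a b} = {}" unfolding olt_def Field_def by auto
  thus ?thesis by simp
qed

lemma uncountable_Field: "uncountable (Field omega1)"
proof
  assume "countable (Field omega1)"
  hence "|Field omega1| \<le>o natLeq" using countable_card_le_natLeq by blast
  moreover have "|Field omega1| =o omega1" using card_of_Field_ordIso[OF W_card] .
  ultimately have "omega1 \<le>o natLeq" using ordIso_ordLeq_trans ordIso_symmetric by blast
  moreover have "natLeq <o omega1" using cardSuc_greater natLeq_Card_order by blast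
  ultimately show False using not_ordLess_ordLeq by blast
qed

lemma olt_Field: "olt a b \<Longrightarrow> a \<in> Field omega1 \<and> b \<in> Field omega1"
  unfolding olt_def Field_def by auto

lemma olt_trans: "olt a b \<Longrightarrow> olt b c \<Longrightarrow> olt a c"
proof -
  assume a: "olt a b" and b: "olt b c"
  have t: "trans omega1" using W_wo_rel wo_rel.TRANS by blast
  have an: "antisym omega1" using W_wo_rel wo_rel.ANTISYM by blast
  have ab: "(a, b) \<in> omega1" and bc: "(b, c) \<in> omega1" using a b unfolding olt_def by simp_all
  have ac: "(a, c) \<in> omega1" using t ab bc by (rule transD)
  have "a \<noteq> c"
  proof
    assume "a = c"
    hence "(b, a) \<in> omega1" using bc by simp
    with ab have "a = b" using an by (metis antisymD)
    thus False using a unfolding olt_def by simp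
  qed
  thus ?thesis unfolding olt_def using ac by simp
qed

lemma olt_irrefl: "\<not> olt a a"
  unfolding olt_def by simp

lemma olt_asym: "olt a b \<Longrightarrow> \<not> olt b a"
  using olt_trans olt_irrefl by blast

lemma olt_linear: "a \<in> Field omega1 \<Longrightarrow> b \<in> Field omega1 \<Longrightarrow> olt a b \<or> a = b \<or> olt b a"
  using W_wo_rel wo_rel.TOTALS unfolding olt_def by fastforce

lemma ole_iff: "(a, b) \<in> omega1 \<longleftrightarrow> (olt a b \<or> (a = b \<and> a \<in> Field omega1))"
proof -
  have r: "Refl omega1" using W_wo_rel wo_rel.REFL by blast
  have "a \<in> Field omega1 \<Longrightarrow> (a, a) \<in> omega1" using r by (simp add: refl_on_def)
  moreover have "(a, b) \<in> omega1 \<Longrightarrow> a \<in> Field omega1" by (rule FieldI1)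
  ultimately show ?thesis unfolding olt_def by auto
qed

lemma wf_olt: "wf {(a, b). olt a b}"
proof -
  have "{(a, b). olt a b} = omega1 - Id" unfolding olt_def by auto
  thus ?thesis using W_wo_rel wo_rel.WF by simp
qed

lemma no_max: "a \<in> Field omega1 \<Longrightarrow> \<exists>b. olt a b"
proof (rule ccontr)
  assume a: "a \<in> Field omega1" and "\<not> (\<exists>b. olt a b)"
  hence "Field omega1 \<subseteq> insert a {b. olt b a}" using olt_linear by auto
  moreover have "countable (insert a {b. olt b a})" using countable_underS by simp
  ultimately have "countable (Field omega1)" by (rule countable_subset)
  thus False using uncountable_Field by blast
qed




definition red :: "('a \<Rightarrow> cval) \<Rightarrow> 'a set set \<Rightarrow> 'a \<Rightarrow> cval" where
  "red h R v = (case h v of CFin k \<Rightarrow> CFin (k - card (inc R v)) | c \<Rightarrow> c)"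

lemma inc_insert: "inc (insert e R) v = (if v \<in> e then insert e (inc R v) else inc R v)"
  unfolding inc_def by auto

lemma inc_empty: "inc {} v = {}"
  unfolding inc_def by auto

lemma red_empty: "red h {} = h"
proof
  fix v show "red h {} v = h v"
    unfolding red_def inc_empty by (cases "h v") auto
qed

lemma finite_inc: "finite R \<Longrightarrow> finite (inc R v)"
  unfolding inc_def by auto

lemma fxy_red:
  assumes "finite R" "{x, y} \<notin> R"
  shows "fxy (red h R) x y = red h (insert {x, y} R)"
proof
  fix v
  show "fxy (red h R) x y v = red h (insert {x, y} R) v"
  proof (cases "v \<in> {x, y}")
    case True
    hence i: "inc (insert {x, y} R) v = insert {x, y} (inc R v)" by (simp add: inc_insert)
    have "{x, y} \<notin> inc R v" using assms(2) unfolding inc_def by auto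
    hence c: "card (inc (insert {x, y} R) v) = Suc (card (inc R v))"
      using i finite_inc[OF assms(1)] by simp
    show ?thesis
    proof (cases "h v")
      case (CFin k)
      show ?thesis using True CFin c unfolding fxy_def red_def cdec_def
        by (cases "k - card (inc R v)") auto
    next
      case CAleph0 thus ?thesis using True unfolding fxy_def red_def cdec_def by simp
    next
      case CAleph1 thus ?thesis using True unfolding fxy_def red_def cdec_def by simp
    qed
  next
    case False
    hence i2: "inc (insert {x, y} R) v = inc R v" by (simp add: inc_insert)
    show ?thesis using False unfolding fxy_def red_def i2 by simp
  qed
qed

locale ctx =
  fixes V :: "'a set" and E :: "'a set set" and f :: "'a \<Rightarrow> cval"
    and P :: "'a set \<Rightarrow> 'a set set \<Rightarrow> ('a \<Rightarrow> cval) \<Rightarrow> bool"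
  assumes inCV: "inC V E f"
    and cardV: "|V| =o omega1"
    and her: "hereditary P"
    and hP: "holds P V E f"
begin

definition Vs :: "'a set \<Rightarrow> 'a set" where
  "Vs B = (V - B) \<union> {x\<in>V. f x = CAleph1}"

definition Es :: "'a set \<Rightarrow> 'a set set" where
  "Es B = {e\<in>E. \<exists>x y. e = {x, y} \<and> x \<in> Vs B \<and> y \<in> V - B}"

definition fs :: "'a set \<Rightarrow> 'a \<Rightarrow> cval" where
  "fs B = (\<lambda>x. if x \<in> Vs B then f x else CFin 0)"

definition Qr :: "'a set \<Rightarrow> 'a set set \<Rightarrow> 'a \<Rightarrow> 'a \<Rightarrow> bool" where
  "Qr B R x y \<longleftrightarrow> y \<in> Vs B \<and> red (fs B) R y \<noteq> CFin 0 \<and> {x, y} \<in> Es B - R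
     \<and> holds P (Vs B) (Es B - insert {x, y} R) (red (fs B) (insert {x, y} R))"

definition Phi :: "'a set \<Rightarrow> 'a set set \<Rightarrow> 'a \<Rightarrow> 'a" where
  "Phi B R x = (if \<exists>y. Qr B R x y then SOME y. Qr B R x y else x)"

lemma Vs_sub: "Vs B \<subseteq> V" unfolding Vs_def by auto

lemma Phi_in: "x \<in> V \<Longrightarrow> Phi B R x \<in> V"
proof -
  assume x: "x \<in> V"
  show ?thesis
  proof (cases "\<exists>y. Qr B R x y")
    case True
    hence "Qr B R x (Phi B R x)" unfolding Phi_def using someI_ex[OF True] by simp
    thus ?thesis unfolding Qr_def using Vs_sub by blast
  next
    case False
    hence "Phi B R x = x" unfolding Phi_def by meson
    thus ?thesis using x by simp
  qed
qed

lemma Phi_Qr: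
  assumes fin: "finite R"
    and hold: "holds P (Vs B) (Es B - R) (red (fs B) R)"
    and x: "x \<in> Vs B" and nz: "red (fs B) R x \<noteq> CFin 0"
  shows "Qr B R x (Phi B R x)"
proof -
  obtain y where y: "y \<in> Vs B" "red (fs B) R y \<noteq> CFin 0" "{x, y} \<in> Es B - R"
    "holds P (Vs B) (Es B - R - {{x, y}}) (fxy (red (fs B) R) x y)"
    using her hold x nz unfolding hereditary_def by blast
  have "Es B - R - {{x, y}} = Es B - insert {x, y} R" by blast
  moreover have "fxy (red (fs B) R) x y = red (fs B) (insert {x, y} R)"
    using fxy_red[OF fin] y(3) by blast
  ultimately have "Qr B R x y" unfolding Qr_def using y by simp
  hence ex: "\<exists>y. Qr B R x y" by blast
  thus ?thesis unfolding Phi_def using someI_ex[OF ex] by simp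
qed

definition fsets :: "'a set \<Rightarrow> 'a set set set" where
  "fsets T = {R. finite R \<and> R \<subseteq> {e. finite e \<and> e \<subseteq> T}}"

lemma countable_fsets: "countable T \<Longrightarrow> countable (fsets T)"
  unfolding fsets_def by (intro countable_Collect_finite_subset)

definition stp :: "'a set set \<Rightarrow> 'a set \<Rightarrow> 'a set" where
  "stp S T = T \<union> (\<lambda>(X, R, x). Phi X R x) ` (S \<times> fsets T \<times> T)"

definition Cl :: "'a set set \<Rightarrow> 'a set \<Rightarrow> 'a set" where
  "Cl S B = (\<Union>n. (stp S ^^ n) B)"

lemma stp_mono: "T \<subseteq> stp S T" unfolding stp_def by blast

lemma stp_chain: "m \<le> n \<Longrightarrow> (stp S ^^ m) B \<subseteq> (stp S ^^ n) B"
proof (induction n)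
  case 0 thus ?case by simp
next
  case (Suc n)
  show ?case
  proof (cases "m = Suc n")
    case True thus ?thesis by simp
  next
    case False
    hence "m \<le> n" using Suc.prems by simp
    hence "(stp S ^^ m) B \<subseteq> (stp S ^^ n) B" using Suc.IH by simp
    also have "\<dots> \<subseteq> (stp S ^^ Suc n) B" using stp_mono by simp
    finally show ?thesis .
  qed
qed

lemma Cl_base: "B \<subseteq> Cl S B"
proof -
  have "(stp S ^^ 0) B = B" by simp
  thus ?thesis unfolding Cl_def by blast
qed

lemma countable_stp: "countable S \<Longrightarrow> countable T \<Longrightarrow> countable (stp S T)"
  unfolding stp_def using countable_fsets by auto

lemma countable_Cl: "countable S \<Longrightarrow> countable B \<Longrightarrow> countable (Cl S B)"
proof -
  assume S: "countable S" and B: "countable B"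
  have "\<And>n. countable ((stp S ^^ n) B)"
  proof -
    fix n show "countable ((stp S ^^ n) B)"
      by (induction n) (simp_all add: B countable_stp S)
  qed
  thus ?thesis unfolding Cl_def by auto
qed

lemma stp_V: "T \<subseteq> V \<Longrightarrow> stp S T \<subseteq> V"
  unfolding stp_def using Phi_in by auto

lemma Cl_V: "B \<subseteq> V \<Longrightarrow> Cl S B \<subseteq> V"
proof -
  assume B: "B \<subseteq> V"
  have "\<And>n. (stp S ^^ n) B \<subseteq> V"
  proof -
    fix n show "(stp S ^^ n) B \<subseteq> V"
      by (induction n) (simp_all add: B stp_V)
  qed
  thus ?thesis unfolding Cl_def by auto
qed

lemma finite_in_chain:
  assumes "finite F" "F \<subseteq> Cl S B"
  shows "\<exists>n. F \<subseteq> (stp S ^^ n) B"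
  using assms
proof (induction F rule: finite_induct)
  case empty thus ?case by simp
next
  case (insert p F)
  have "F \<subseteq> Cl S B" using insert.prems by simp
  then obtain n where n: "F \<subseteq> (stp S ^^ n) B" using insert.IH by blast
  have "p \<in> Cl S B" using insert.prems by simp
  then obtain m where m: "p \<in> (stp S ^^ m) B" unfolding Cl_def by blast
  have c1: "(stp S ^^ n) B \<subseteq> (stp S ^^ (max n m)) B" by (rule stp_chain) simp
  have c2: "(stp S ^^ m) B \<subseteq> (stp S ^^ (max n m)) B" by (rule stp_chain) simp
  have "insert p F \<subseteq> (stp S ^^ (max n m)) B" using n m c1 c2 by blast
  thus ?case by blast
qed

lemma Cl_closed:
  assumes X: "X \<in> S" and R: "R \<in> fsets (Cl S B)" and x: "x \<in> Cl S B"
  shows "Phi X R x \<in> Cl S B"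
proof -
  have fin: "finite (insert x (\<Union>R))" using R unfolding fsets_def by auto
  have sub: "insert x (\<Union>R) \<subseteq> Cl S B" using R x unfolding fsets_def by auto
  obtain n where n: "insert x (\<Union>R) \<subseteq> (stp S ^^ n) B" using finite_in_chain[OF fin sub] by blast
  have "R \<in> fsets ((stp S ^^ n) B)" using R n unfolding fsets_def by auto
  moreover have "x \<in> (stp S ^^ n) B" using n by blast
  ultimately have "(X, R, x) \<in> S \<times> fsets ((stp S ^^ n) B) \<times> (stp S ^^ n) B" using X by blast
  hence "Phi X R x \<in> stp S ((stp S ^^ n) B)" unfolding stp_def by force
  hence "Phi X R x \<in> (stp S ^^ Suc n) B" by simp
  thus ?thesis unfolding Cl_def by blast
qed

end



context ctx begin

definition g :: "nat set \<Rightarrow> 'a" where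
  "g = (SOME g. bij_betw g (Field omega1) V)"

lemma g_bij: "bij_betw g (Field omega1) V"
proof -
  have "|Field omega1| =o omega1" using card_of_Field_ordIso[OF W_card] .
  moreover have "omega1 =o |V|" using cardV ordIso_symmetric by blast
  ultimately have "|Field omega1| =o |V|" using ordIso_transitive by blast
  hence ex: "\<exists>g. bij_betw g (Field omega1) V" using card_of_ordIso by blast
  show ?thesis unfolding g_def using someI_ex[OF ex] .
qed

definition NN :: "(nat set \<Rightarrow> 'a set) \<Rightarrow> nat set \<Rightarrow> 'a set" where
  "NN A a = Cl (A ` {c. (c, a) \<in> omega1}) (A a \<union> {g a})"

definition FF :: "(nat set \<Rightarrow> 'a set) \<Rightarrow> nat set \<Rightarrow> 'a set" where
  "FF A b = \<Union> (NN A ` {a. olt a b})"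

definition Af :: "nat set \<Rightarrow> 'a set" where
  "Af = wfrec {(a, b). olt a b} FF"

lemma ole_olt_trans: "(c, a) \<in> omega1 \<Longrightarrow> olt a b \<Longrightarrow> olt c b"
  using ole_iff olt_trans by blast

lemma adm_FF: "adm_wf {(a, b). olt a b} FF"
  unfolding adm_wf_def
proof (intro allI impI)
  fix F G :: "nat set \<Rightarrow> 'a set" and x
  assume h: "\<forall>z. (z, x) \<in> {(a, b). olt a b} \<longrightarrow> F z = G z"
  have "\<And>a. olt a x \<Longrightarrow> NN F a = NN G a"
  proof -
    fix a assume a: "olt a x"
    have "F ` {c. (c, a) \<in> omega1} = G ` {c. (c, a) \<in> omega1}"
    proof (rule image_cong)
      fix c assume "c \<in> {c. (c, a) \<in> omega1}"
      hence "olt c x" using ole_olt_trans a by blast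
      thus "F c = G c" using h by blast
    qed simp
    moreover have "F a = G a" using h a by blast
    ultimately show "NN F a = NN G a" unfolding NN_def by simp
  qed
  thus "FF F x = FF G x" unfolding FF_def by auto
qed

lemma Af_eq: "Af b = \<Union> (NN Af ` {a. olt a b})"
proof -
  have "Af = FF Af" unfolding Af_def by (rule wfrec_fixpoint[OF wf_olt adm_FF])
  hence "Af b = FF Af b" by simp
  thus ?thesis unfolding FF_def .
qed

lemma NN_base: "Af a \<subseteq> NN Af a" "g a \<in> NN Af a"
  unfolding NN_def using Cl_base by blast+

lemma NN_Af: "olt a b \<Longrightarrow> NN Af a \<subseteq> Af b"
  using Af_eq[of b] by blast

lemma Af_mono: "(a, b) \<in> omega1 \<Longrightarrow> Af a \<subseteq> Af b"
proof -
  assume ab: "(a, b) \<in> omega1"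
  have "\<And>c. olt c a \<Longrightarrow> olt c b"
  proof -
    fix c assume "olt c a"
    thus "olt c b" using ab ole_iff olt_trans by blast
  qed
  thus ?thesis using Af_eq[of a] Af_eq[of b] by blast
qed

lemma NN_mono: "(a, b) \<in> omega1 \<Longrightarrow> NN Af a \<subseteq> NN Af b"
proof -
  assume ab: "(a, b) \<in> omega1"
  show ?thesis
  proof (cases "a = b")
    case True thus ?thesis by simp
  next
    case False
    hence "olt a b" using ab unfolding olt_def by simp
    hence "NN Af a \<subseteq> Af b" by (rule NN_Af)
    also have "\<dots> \<subseteq> NN Af b" by (rule NN_base)
    finally show ?thesis .
  qed
qed

lemma ole_countable: "countable {c. (c, a) \<in> omega1}"
proof -
  have "{c. (c, a) \<in> omega1} \<subseteq> insert a {c. olt c a}" unfolding olt_def by auto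
  moreover have "countable (insert a {c. olt c a})" using countable_underS by simp
  ultimately show ?thesis by (rule countable_subset)
qed

lemma Af_countable: "countable (Af b)"
proof (induction b rule: wf_induct_rule[OF wf_olt])
  case (1 b)
  have "\<And>a. olt a b \<Longrightarrow> countable (NN Af a)"
  proof -
    fix a assume a: "olt a b"
    have "countable (Af a)" using 1 a by simp
    moreover have "countable (Af ` {c. (c, a) \<in> omega1})" using ole_countable by simp
    ultimately show "countable (NN Af a)" unfolding NN_def
      by (intro countable_Cl) simp_all
  qed
  hence "countable (\<Union> (NN Af ` {a. olt a b}))"
    using countable_underS by (intro countable_UN) auto
  thus ?case using Af_eq[of b] by simp
qed

lemma Af_V: "Af b \<subseteq> V"
proof (induction b rule: wf_induct_rule[OF wf_olt])
  case (1 b)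
  have "\<And>a. olt a b \<Longrightarrow> NN Af a \<subseteq> V"
  proof -
    fix a assume a: "olt a b"
    have "Af a \<subseteq> V" using 1 a by simp
    moreover have "a \<in> Field omega1" using a olt_Field by blast
    hence "g a \<in> V" using g_bij unfolding bij_betw_def by blast
    ultimately show "NN Af a \<subseteq> V" unfolding NN_def by (intro Cl_V) simp
  qed
  thus ?case using Af_eq[of b] by blast
qed

lemma Af_limit: "is_limit l \<Longrightarrow> Af l = (\<Union>b\<in>{b. olt b l}. Af b)"
proof -
  assume l: "is_limit l"
  show ?thesis
  proof
    show "Af l \<subseteq> (\<Union>b\<in>{b. olt b l}. Af b)"
    proof
      fix x assume "x \<in> Af l"
      then obtain a where a: "olt a l" "x \<in> NN Af a" using Af_eq[of l] by blast
      then obtain b where b: "olt a b" "olt b l" using l unfolding is_limit_def by blast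
      have "x \<in> Af b" using NN_Af[OF b(1)] a(2) by blast
      thus "x \<in> (\<Union>b\<in>{b. olt b l}. Af b)" using b(2) by blast
    qed
  next
    show "(\<Union>b\<in>{b. olt b l}. Af b) \<subseteq> Af l"
    proof (rule UN_least)
      fix b assume "b \<in> {b. olt b l}"
      hence "(b, l) \<in> omega1" unfolding olt_def by simp
      thus "Af b \<subseteq> Af l" by (rule Af_mono)
    qed
  qed
qed

lemma Af_cover: "V = (\<Union>a\<in>Field omega1. Af a)"
proof
  show "(\<Union>a\<in>Field omega1. Af a) \<subseteq> V"
    by (rule UN_least) (rule Af_V)
next
  show "V \<subseteq> (\<Union>a\<in>Field omega1. Af a)"
  proof
    fix x assume "x \<in> V"
    hence "x \<in> g ` Field omega1" using g_bij unfolding bij_betw_def by simp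
    then obtain a where a: "a \<in> Field omega1" "g a = x" by (rule imageE) simp
    obtain b where b: "olt a b" using no_max[OF a(1)] by blast
    have "g a \<in> Af b" using NN_Af[OF b] NN_base(2)[of a] by (rule subsetD)
    hence "x \<in> Af b" using a(2) by simp
    moreover have "b \<in> Field omega1" using b olt_Field by simp
    ultimately show "x \<in> (\<Union>a\<in>Field omega1. Af a)" by (rule UN_I[rotated])
  qed
qed

lemma Af_filtration: "filtration V Af"
  unfolding filtration_def
proof (intro conjI allI impI ballI)
  show "\<And>a b. (a, b) \<in> omega1 \<Longrightarrow> Af a \<subseteq> Af b" by (rule Af_mono)
  show "\<And>l. is_limit l \<Longrightarrow> Af l = (\<Union>b\<in>{b. olt b l}. Af b)" by (rule Af_limit)
  show "\<And>a. countable (Af a)" by (rule Af_countable)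
  show "V = (\<Union>a\<in>Field omega1. Af a)" by (rule Af_cover)
qed

lemma Af_zero: "\<not> (\<exists>a. olt a z) \<Longrightarrow> Af z = {}"
  using Af_eq[of z] by auto

lemma Af_closed_aux:
  assumes "finite F" "F \<subseteq> Af b" "olt c b"
  shows "\<exists>a. olt a b \<and> (c, a) \<in> omega1 \<and> F \<subseteq> NN Af a"
  using assms
proof (induction F rule: finite_induct)
  case empty
  have "c \<in> Field omega1" using olt_Field[OF empty.prems(2)] by simp
  hence "(c, c) \<in> omega1" using ole_iff by simp
  moreover have "{} \<subseteq> NN Af c" by simp
  ultimately show ?case using empty.prems(2) by blast
next
  case (insert p F)
  have "F \<subseteq> Af b" using insert.prems by simp
  then obtain a where a: "olt a b" "(c, a) \<in> omega1" "F \<subseteq> NN Af a" using insert.IH insert.prems(2) by blast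
  have "p \<in> \<Union> (NN Af ` {a. olt a b})" using insert.prems Af_eq[of b] by simp
  then obtain a' where a': "olt a' b" "p \<in> NN Af a'" by blast
  have fa: "a \<in> Field omega1" "a' \<in> Field omega1" using olt_Field[OF a(1)] olt_Field[OF a'(1)] by simp_all
  show ?case
  proof (cases "olt a a'")
    case True
    hence "(a, a') \<in> omega1" unfolding olt_def by simp
    hence "NN Af a \<subseteq> NN Af a'" by (rule NN_mono)
    moreover have "olt c a'" using ole_olt_trans[OF a(2) True] .
    hence "(c, a') \<in> omega1" unfolding olt_def by simp
    ultimately have "insert p F \<subseteq> NN Af a'" using a(3) a'(2) by blast
    thus ?thesis using a'(1) \<open>(c, a') \<in> omega1\<close> by blast
  next
    case False
    hence "a' = a \<or> olt a' a" using olt_linear[OF fa] by blast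
    hence "(a', a) \<in> omega1" using ole_iff fa by auto
    hence "NN Af a' \<subseteq> NN Af a" by (rule NN_mono)
    hence "insert p F \<subseteq> NN Af a" using a(3) a'(2) by blast
    thus ?thesis using a(1,2) by blast
  qed
qed

lemma Af_closed:
  assumes c: "olt c b" and R: "R \<in> fsets (Af b)" and x: "x \<in> Af b"
  shows "Phi (Af c) R x \<in> Af b"
proof -
  have fin: "finite (insert x (\<Union>R))" using R unfolding fsets_def by auto
  have sub: "insert x (\<Union>R) \<subseteq> Af b" using R x unfolding fsets_def by auto
  obtain a where a: "olt a b" "(c, a) \<in> omega1" "insert x (\<Union>R) \<subseteq> NN Af a"
    using Af_closed_aux[OF fin sub c] by blast
  have R': "R \<in> fsets (NN Af a)" using R a(3) unfolding fsets_def by auto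
  have "Af c \<in> Af ` {c. (c, a) \<in> omega1}" using a(2) by blast
  moreover have "x \<in> NN Af a" using a(3) by simp
  ultimately have "Phi (Af c) R x \<in> NN Af a" unfolding NN_def
    using R' unfolding NN_def by (intro Cl_closed)
  thus ?thesis using NN_Af[OF a(1)] by (rule rev_subsetD)
qed

end



context ctx begin

definition Qs :: "'a set \<Rightarrow> 'a set \<Rightarrow> 'a set" where
  "Qs B T = (T - B) \<union> {z \<in> T. f z = CAleph1}"

definition xs :: "'a set \<Rightarrow> 'a set \<Rightarrow> nat \<Rightarrow> 'a" where
  "xs B T n = from_nat_into (Qs B T) (fst (prod_decode n))"

primrec Rs :: "'a set \<Rightarrow> 'a set \<Rightarrow> nat \<Rightarrow> 'a set set" where
  "Rs B T 0 = {}"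
| "Rs B T (Suc n) = (if xs B T n \<in> Qs B T \<and> red (fs B) (Rs B T n) (xs B T n) \<noteq> CFin 0
     then insert {xs B T n, Phi B (Rs B T n) (xs B T n)} (Rs B T n) else Rs B T n)"

definition Fa :: "'a set \<Rightarrow> 'a set \<Rightarrow> 'a set set" where
  "Fa B T = (\<Union>n. Rs B T n)"

definition good_pair :: "'a set \<Rightarrow> 'a set \<Rightarrow> bool" where
  "good_pair B T \<longleftrightarrow> holds P (Vs B) (Es B) (fs B) \<and> T \<subseteq> V
     \<and> (\<forall>R\<in>fsets T. \<forall>x\<in>T. Phi B R x \<in> T)"

lemma Qs_Vs: "T \<subseteq> V \<Longrightarrow> Qs B T \<subseteq> Vs B"
  unfolding Qs_def Vs_def by auto

lemma Qs_T: "Qs B T \<subseteq> T"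
  unfolding Qs_def by auto

lemma Rs_mono1: "Rs B T n \<subseteq> Rs B T (Suc n)"
  by auto

lemma Rs_mono: "m \<le> n \<Longrightarrow> Rs B T m \<subseteq> Rs B T n"
proof (induction n)
  case 0 thus ?case by simp
next
  case (Suc n)
  show ?case
  proof (cases "m = Suc n")
    case True thus ?thesis by simp
  next
    case False
    hence "Rs B T m \<subseteq> Rs B T n" using Suc by simp
    thus ?thesis using Rs_mono1[of B T n] by (rule order_trans)
  qed
qed

definition invR :: "'a set \<Rightarrow> 'a set \<Rightarrow> 'a set set \<Rightarrow> bool" where
  "invR B T R \<longleftrightarrow> R \<in> fsets T \<and> R \<subseteq> Es B
     \<and> holds P (Vs B) (Es B - R) (red (fs B) R)
     \<and> (\<forall>v k. fs B v = CFin k \<longrightarrow> card (inc R v) \<le> k)"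

lemma red_nz_card:
  assumes "fs B v = CFin k" "red (fs B) R v \<noteq> CFin 0"
  shows "card (inc R v) < k"
  using assms unfolding red_def by simp

lemma inv_step:
  assumes gp: "good_pair B T" and iv: "invR B T R" and x: "x \<in> Qs B T"
    and nz: "red (fs B) R x \<noteq> CFin 0"
  shows "invR B T (insert {x, Phi B R x} R)"
proof -
  let ?y = "Phi B R x"
  have TV: "T \<subseteq> V" using gp unfolding good_pair_def by simp
  have fin: "finite R" using iv unfolding invR_def fsets_def by simp
  have hold: "holds P (Vs B) (Es B - R) (red (fs B) R)" using iv unfolding invR_def by simp
  have xV: "x \<in> Vs B" using Qs_Vs[OF TV] x by blast
  have q: "Qr B R x ?y" using Phi_Qr[OF fin hold xV nz] .
  have ynz: "red (fs B) R ?y \<noteq> CFin 0" and eE: "{x, ?y} \<in> Es B - R"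
    and h2: "holds P (Vs B) (Es B - insert {x, ?y} R) (red (fs B) (insert {x, ?y} R))"
    using q unfolding Qr_def by simp_all
  have xT: "x \<in> T" using x Qs_T by blast
  have RT: "R \<in> fsets T" using iv unfolding invR_def by simp
  have yT: "?y \<in> T" using gp RT xT unfolding good_pair_def by blast
  have f1: "insert {x, ?y} R \<in> fsets T" using RT xT yT unfolding fsets_def by auto
  have f2: "insert {x, ?y} R \<subseteq> Es B" using iv eE unfolding invR_def by auto
  have f3: "\<forall>v k. fs B v = CFin k \<longrightarrow> card (inc (insert {x, ?y} R) v) \<le> k"
  proof (intro allI impI)
    fix v k assume fv: "fs B v = CFin k"
    show "card (inc (insert {x, ?y} R) v) \<le> k"
    proof (cases "v \<in> {x, ?y}")
      case True
      hence "red (fs B) R v \<noteq> CFin 0" using nz ynz by auto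
      hence lt: "card (inc R v) < k" using red_nz_card fv by blast
      have "{x, ?y} \<notin> inc R v" using eE unfolding inc_def by auto
      moreover have "inc (insert {x, ?y} R) v = insert {x, ?y} (inc R v)"
        using True by (simp add: inc_insert)
      ultimately have "card (inc (insert {x, ?y} R) v) = Suc (card (inc R v))"
        using finite_inc[OF fin] by simp
      thus ?thesis using lt by simp
    next
      case False
      hence "inc (insert {x, ?y} R) v = inc R v" by (simp add: inc_insert)
      thus ?thesis using iv fv unfolding invR_def by simp
    qed
  qed
  show ?thesis unfolding invR_def using f1 f2 h2 f3 by blast
qed

lemma inv_Rs: "good_pair B T \<Longrightarrow> invR B T (Rs B T n)"
proof (induction n)
  case 0
  have "holds P (Vs B) (Es B) (fs B)" using 0 unfolding good_pair_def by simp
  moreover have "{} \<in> fsets T" unfolding fsets_def by simp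
  ultimately show ?case unfolding invR_def by (simp add: red_empty inc_empty)
next
  case (Suc n)
  show ?case
  proof (cases "xs B T n \<in> Qs B T \<and> red (fs B) (Rs B T n) (xs B T n) \<noteq> CFin 0")
    case True
    have "invR B T (insert {xs B T n, Phi B (Rs B T n) (xs B T n)} (Rs B T n))"
      by (rule inv_step[OF Suc.prems Suc.IH[OF Suc.prems]]) (use True in simp_all)
    thus ?thesis using True by simp
  next
    case False
    have "Rs B T (Suc n) = Rs B T n" unfolding Rs.simps by (rule if_not_P[OF False])
    thus ?thesis using Suc.IH[OF Suc.prems] by simp
  qed
qed

lemma xs_often:
  assumes "countable T" "z \<in> Qs B T"
  shows "\<exists>n\<ge>N. xs B T n = z"
proof -
  have cQ: "countable (Qs B T)" using assms(1) Qs_T countable_subset by blast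
  let ?n = "prod_encode (to_nat_on (Qs B T) z, N)"
  have "N \<le> ?n" by (rule le_prod_encode_2)
  moreover have "xs B T ?n = z" unfolding xs_def using cQ assms(2) by simp
  ultimately show ?thesis by blast
qed

lemma Fa_sub: "good_pair B T \<Longrightarrow> Fa B T \<subseteq> Es B"
  unfolding Fa_def using inv_Rs unfolding invR_def by blast

lemma Fa_T: "good_pair B T \<Longrightarrow> e \<in> Fa B T \<Longrightarrow> e \<subseteq> T"
  unfolding Fa_def using inv_Rs unfolding invR_def fsets_def by blast

lemma Fa_countable: "good_pair B T \<Longrightarrow> countable (Fa B T)"
  unfolding Fa_def using inv_Rs unfolding invR_def fsets_def
  by (intro countable_UN) (auto intro: countable_finite)

lemma inc_Fa: "inc (Fa B T) z = (\<Union>n. inc (Rs B T n) z)"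
  unfolding Fa_def inc_def by auto

lemma step_grow:
  assumes gp: "good_pair B T" and z: "z \<in> Qs B T"
    and nz: "red (fs B) (Rs B T n) z \<noteq> CFin 0" and xn: "xs B T n = z"
  shows "card (inc (Rs B T (Suc n)) z) = Suc (card (inc (Rs B T n) z))"
proof -
  let ?R = "Rs B T n" let ?e = "{z, Phi B ?R z}"
  have iv: "invR B T (Rs B T (Suc n))" using inv_Rs[OF gp] .
  have c: "xs B T n \<in> Qs B T \<and> red (fs B) (Rs B T n) (xs B T n) \<noteq> CFin 0" using z nz xn by simp
  have R1: "Rs B T (Suc n) = insert ?e ?R" unfolding Rs.simps if_P[OF c] using xn by simp
  have fin: "finite ?R" using inv_Rs[OF gp, of n] unfolding invR_def fsets_def by simp
  have "{z, Phi B ?R z} \<notin> ?R"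
  proof -
    have TV: "T \<subseteq> V" using gp unfolding good_pair_def by simp
    have hold: "holds P (Vs B) (Es B - ?R) (red (fs B) ?R)"
      using inv_Rs[OF gp, of n] unfolding invR_def by simp
    have "Qr B ?R z (Phi B ?R z)"
      using Phi_Qr[OF fin hold _ nz] Qs_Vs[OF TV] z by blast
    thus ?thesis unfolding Qr_def by simp
  qed
  hence "?e \<notin> inc ?R z" unfolding inc_def by simp
  moreover have "inc (Rs B T (Suc n)) z = insert ?e (inc ?R z)"
    unfolding R1 by (simp add: inc_insert)
  ultimately show ?thesis using finite_inc[OF fin] by simp
qed

lemma card_inc_mono:
  assumes gp: "good_pair B T" and mn: "m \<le> n"
  shows "card (inc (Rs B T m) z) \<le> card (inc (Rs B T n) z)"
proof -
  have fin: "finite (Rs B T n)" using inv_Rs[OF gp, of n] unfolding invR_def fsets_def by simp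
  have "inc (Rs B T m) z \<subseteq> inc (Rs B T n) z" using Rs_mono[OF mn] unfolding inc_def by auto
  thus ?thesis using finite_inc[OF fin] by (intro card_mono)
qed

lemma grow_to:
  assumes gp: "good_pair B T" and cT: "countable T" and z: "z \<in> Qs B T"
    and nzc: "\<And>n. card (inc (Rs B T n) z) < K \<Longrightarrow> red (fs B) (Rs B T n) z \<noteq> CFin 0"
  shows "m \<le> K \<Longrightarrow> \<exists>n. m \<le> card (inc (Rs B T n) z)"
proof (induction m)
  case 0 thus ?case by simp
next
  case (Suc m)
  then obtain n where n: "m \<le> card (inc (Rs B T n) z)" by auto
  obtain n' where n': "n' \<ge> n" "xs B T n' = z" using xs_often[OF cT z] by blast
  have mono: "card (inc (Rs B T n) z) \<le> card (inc (Rs B T n') z)"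
    using card_inc_mono[OF gp n'(1)] .
  show ?case
  proof (cases "Suc m \<le> card (inc (Rs B T n') z)")
    case True thus ?thesis by blast
  next
    case False
    hence eq: "card (inc (Rs B T n') z) = m" using n mono by simp
    hence "card (inc (Rs B T n') z) < K" using Suc.prems by simp
    hence "red (fs B) (Rs B T n') z \<noteq> CFin 0" using nzc by blast
    hence "card (inc (Rs B T (Suc n')) z) = Suc m" using step_grow[OF gp z _ n'(2)] eq by simp
    thus ?thesis by (metis order_refl)
  qed
qed

lemma Fa_finite_vertex:
  assumes gp: "good_pair B T" and cT: "countable T" and z: "z \<in> Qs B T"
    and fz: "fs B z = CFin k"
  shows "finite (inc (Fa B T) z) \<and> card (inc (Fa B T) z) = k"
proof -
  have nzc: "\<And>n. card (inc (Rs B T n) z) < k \<Longrightarrow> red (fs B) (Rs B T n) z \<noteq> CFin 0"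
    using fz unfolding red_def by simp
  obtain N where N: "k \<le> card (inc (Rs B T N) z)" using grow_to[OF gp cT z nzc, of k] by blast
  have bound: "\<And>n. card (inc (Rs B T n) z) \<le> k"
  proof -
    fix n
    have "\<forall>v k. fs B v = CFin k \<longrightarrow> card (inc (Rs B T n) v) \<le> k"
      using inv_Rs[OF gp, of n] unfolding invR_def by (elim conjE)
    thus "card (inc (Rs B T n) z) \<le> k" using fz by simp
  qed
  have finn: "\<And>n. finite (inc (Rs B T n) z)"
  proof -
    fix n
    have "Rs B T n \<in> fsets T" using inv_Rs[OF gp, of n] unfolding invR_def by (elim conjE)
    hence "finite (Rs B T n)" unfolding fsets_def by simp
    thus "finite (inc (Rs B T n) z)" by (rule finite_inc)
  qed
  have cN: "card (inc (Rs B T N) z) = k" using N bound[of N] by simp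
  have "\<And>n. inc (Rs B T n) z \<subseteq> inc (Rs B T N) z"
  proof -
    fix n show "inc (Rs B T n) z \<subseteq> inc (Rs B T N) z"
    proof (cases "n \<le> N")
      case True thus ?thesis using Rs_mono[OF True] unfolding inc_def by auto
    next
      case False
      hence sub: "inc (Rs B T N) z \<subseteq> inc (Rs B T n) z" using Rs_mono[of N n] unfolding inc_def by auto
      have "card (inc (Rs B T n) z) \<le> card (inc (Rs B T N) z)" using bound[of n] cN by simp
      hence "inc (Rs B T N) z = inc (Rs B T n) z" by (intro card_seteq[OF finn sub])
      thus ?thesis by simp
    qed
  qed
  hence "inc (Fa B T) z = inc (Rs B T N) z" unfolding inc_Fa by blast
  thus ?thesis using cN finn by simp
qed

lemma Fa_inf_vertex:
  assumes gp: "good_pair B T" and cT: "countable T" and z: "z \<in> Qs B T"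
    and fz: "fs B z = CAleph0"
  shows "infinite (inc (Fa B T) z)"
proof
  assume fin: "finite (inc (Fa B T) z)"
  let ?K = "Suc (card (inc (Fa B T) z))"
  have nzc: "\<And>n. card (inc (Rs B T n) z) < ?K \<Longrightarrow> red (fs B) (Rs B T n) z \<noteq> CFin 0"
    using fz unfolding red_def by simp
  obtain N where N: "?K \<le> card (inc (Rs B T N) z)" using grow_to[OF gp cT z nzc, of ?K] by blast
  have "inc (Rs B T N) z \<subseteq> inc (Fa B T) z" unfolding inc_Fa by blast
  hence "card (inc (Rs B T N) z) \<le> card (inc (Fa B T) z)" using fin by (rule card_mono[rotated])
  thus False using N by simp
qed

lemma Fa_aleph1_vertex:
  assumes gp: "good_pair B T" and cT: "countable T" and z: "z \<in> Qs B T"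
    and fz: "fs B z = CAleph1"
  shows "\<exists>e\<in>Fa B T. z \<in> e"
proof -
  have nzc: "\<And>n. card (inc (Rs B T n) z) < 1 \<Longrightarrow> red (fs B) (Rs B T n) z \<noteq> CFin 0"
    using fz unfolding red_def by simp
  obtain N where N: "1 \<le> card (inc (Rs B T N) z)" using grow_to[OF gp cT z nzc, of 1] by blast
  hence "inc (Rs B T N) z \<noteq> {}" by auto
  then obtain e where "e \<in> Rs B T N" "z \<in> e" unfolding inc_def by auto
  thus ?thesis unfolding Fa_def by blast
qed

end



context ctx begin

lemma V_uncountable: "uncountable V"
proof
  assume "countable V"
  hence "|V| \<le>o natLeq" using countable_card_le_natLeq by blast
  hence "omega1 \<le>o natLeq" using cardV ordIso_ordLeq_trans ordIso_symmetric by blast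
  moreover have "natLeq <o omega1" using cardSuc_greater natLeq_Card_order by blast
  ultimately show False using not_ordLess_ordLeq by blast
qed

lemma graphV: "graph V E" using inCV unfolding inC_def by simp

lemma E_le_V: "|E| \<le>o |V|"
proof -
  have "E \<subseteq> (\<lambda>(a, b). {a, b}) ` (V \<times> V)"
  proof
    fix e assume e: "e \<in> E"
    hence "e \<subseteq> V" "card e = 2" using graphV unfolding graph_def by auto
    then obtain a b where "e = {a, b}" "a \<in> V" "b \<in> V" using card_2_iff by (metis insert_subset)
    thus "e \<in> (\<lambda>(a, b). {a, b}) ` (V \<times> V)" by force
  qed
  hence "|E| \<le>o |(\<lambda>(a, b). {a, b}) ` (V \<times> V)|" by (rule card_of_mono1)
  moreover have "|(\<lambda>(a, b). {a, b}) ` (V \<times> V)| \<le>o |V \<times> V|" by (rule card_of_image)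
  moreover have "|V \<times> V| =o |V|"
    using V_uncountable card_of_Times_same_infinite countable_finite by blast
  ultimately show ?thesis using ordLeq_transitive ordLeq_ordIso_trans by blast
qed

lemma uncountable_iso:
  assumes "A \<subseteq> E" "uncountable A"
  shows "|A| =o omega1"
proof -
  have "|A| \<le>o |E|" using assms(1) by (rule card_of_mono1)
  hence le: "|A| \<le>o omega1" using E_le_V cardV ordLeq_transitive ordLeq_ordIso_trans by blast
  have "\<not> |A| \<le>o natLeq" using assms(2) countable_card_le_natLeq by blast
  hence "natLeq <o |A|" using not_ordLeq_iff_ordLess natLeq_Well_order card_of_Well_order by blast
  hence "omega1 \<le>o |A|"
    using cardSuc_ordLess_ordLeq[OF natLeq_Card_order card_of_Card_order] by blast
  thus ?thesis using le ordIso_iff_ordLeq by blast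
qed

lemma al_eq:
  "V_al V f A a = Vs (A a)" "E_al V E f A a = Es (A a)" "f_al V f A a = fs (A a)"
  unfolding V_al_def Vs_def E_al_def Es_def f_al_def fs_def by simp_all

lemma Vs_empty: "Vs {} = V"
  unfolding Vs_def by auto

lemma Es_empty: "Es {} = E"
proof
  show "Es {} \<subseteq> E" unfolding Es_def by auto
next
  show "E \<subseteq> Es {}"
  proof
    fix e assume e: "e \<in> E"
    hence "e \<subseteq> V" "card e = 2" using graphV unfolding graph_def by auto
    then obtain a b where "e = {a, b}" "a \<in> V" "b \<in> V" using card_2_iff by (metis insert_subset)
    thus "e \<in> Es {}" unfolding Es_def Vs_empty using e by auto
  qed
qed

lemma fs_empty: "fs {} = f"
proof
  fix x show "fs {} x = f x"
    using inCV unfolding fs_def Vs_empty inC_def by auto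
qed

lemma Es_avoid: "e \<in> Es B \<Longrightarrow> x \<in> B \<Longrightarrow> f x \<noteq> CAleph1 \<Longrightarrow> x \<notin> e"
  unfolding Es_def Vs_def by auto

lemma Es_out: "e \<in> Es B \<Longrightarrow> \<not> e \<subseteq> B"
  unfolding Es_def by auto

end

locale ctx2 = ctx +
  fixes C :: "nat set set"
  assumes clubC: "club C"
    and goodC: "\<And>c. c \<in> C \<Longrightarrow> holds P (Vs (Af c)) (Es (Af c)) (fs (Af c))"
begin

lemma C_Field: "C \<subseteq> Field omega1" using clubC unfolding club_def by simp

lemma C_unb: "a \<in> Field omega1 \<Longrightarrow> \<exists>c\<in>C. olt a c"
  using clubC unfolding club_def by simp

lemma C_closed: "is_limit l \<Longrightarrow> (\<And>a. olt a l \<Longrightarrow> \<exists>b\<in>C. olt a b \<and> olt b l) \<Longrightarrow> l \<in> C"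
  using clubC unfolding club_def by blast

lemma zero_ex: "\<exists>z. z \<in> Field omega1 \<and> (\<forall>a. \<not> olt a z)"
proof -
  have "Field omega1 \<noteq> {}" using uncountable_Field by auto
  then obtain x where x: "x \<in> Field omega1" by blast
  show ?thesis
  proof (rule wfE_min[OF wf_olt x])
    fix z assume z: "z \<in> Field omega1" and m: "\<And>y. (y, z) \<in> {(a, b). olt a b} \<Longrightarrow> y \<notin> Field omega1"
    have "\<forall>a. \<not> olt a z"
    proof (intro allI notI)
      fix a assume "olt a z"
      thus False using m olt_Field by blast
    qed
    thus ?thesis using z by blast
  qed
qed

definition z0 :: "nat set" where
  "z0 = (SOME z. z \<in> Field omega1 \<and> (\<forall>a. \<not> olt a z))"

lemma z0: "z0 \<in> Field omega1" "\<And>a. \<not> olt a z0"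
  using someI_ex[OF zero_ex] unfolding z0_def by blast+

lemma z0_le: "a \<in> Field omega1 \<Longrightarrow> (z0, a) \<in> omega1"
proof -
  assume a: "a \<in> Field omega1"
  hence "olt z0 a \<or> z0 = a \<or> olt a z0" using olt_linear z0(1) by blast
  hence "olt z0 a \<or> z0 = a" using z0(2) by blast
  thus ?thesis using ole_iff a by blast
qed

lemma Af_z0: "Af z0 = {}" using Af_zero z0(2) by blast

definition C0 :: "nat set set" where "C0 = insert z0 C"

lemma C0_Field: "C0 \<subseteq> Field omega1" unfolding C0_def using C_Field z0(1) by blast

lemma good0: "\<alpha> \<in> C0 \<Longrightarrow> holds P (Vs (Af \<alpha>)) (Es (Af \<alpha>)) (fs (Af \<alpha>))"
proof -
  assume a: "\<alpha> \<in> C0"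
  show ?thesis
  proof (cases "\<alpha> = z0")
    case True
    show ?thesis using hP by (simp add: True Af_z0 Vs_empty Es_empty fs_empty)
  next
    case False thus ?thesis using a goodC unfolding C0_def by blast
  qed
qed

lemma nxt_ex: "\<alpha> \<in> Field omega1 \<Longrightarrow> \<exists>\<beta>. \<beta> \<in> C \<and> olt \<alpha> \<beta> \<and> (\<forall>c\<in>C. olt \<alpha> c \<longrightarrow> (\<beta>, c) \<in> omega1)"
proof -
  assume a: "\<alpha> \<in> Field omega1"
  obtain c where c: "c \<in> C" "olt \<alpha> c" using C_unb[OF a] by blast
  hence cin: "c \<in> {c \<in> C. olt \<alpha> c}" by simp
  show ?thesis
  proof (rule wfE_min[OF wf_olt cin])
    fix m assume m: "m \<in> {c \<in> C. olt \<alpha> c}"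
      and mm: "\<And>y. (y, m) \<in> {(a, b). olt a b} \<Longrightarrow> y \<notin> {c \<in> C. olt \<alpha> c}"
    have "\<forall>c'\<in>C. olt \<alpha> c' \<longrightarrow> (m, c') \<in> omega1"
    proof (intro ballI impI)
      fix c' assume c': "c' \<in> C" "olt \<alpha> c'"
      have f: "m \<in> Field omega1" "c' \<in> Field omega1" using m c' C_Field by blast+
      have "\<not> olt c' m" using mm c' by blast
      hence "olt m c' \<or> m = c'" using olt_linear[OF f] by blast
      thus "(m, c') \<in> omega1" using ole_iff f by blast
    qed
    thus ?thesis using m by blast
  qed
qed

definition nxt :: "nat set \<Rightarrow> nat set" where
  "nxt \<alpha> = (SOME \<beta>. \<beta> \<in> C \<and> olt \<alpha> \<beta> \<and> (\<forall>c\<in>C. olt \<alpha> c \<longrightarrow> (\<beta>, c) \<in> omega1))"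

lemma nxt: "\<alpha> \<in> Field omega1 \<Longrightarrow> nxt \<alpha> \<in> C" "\<alpha> \<in> Field omega1 \<Longrightarrow> olt \<alpha> (nxt \<alpha>)"
  "\<alpha> \<in> Field omega1 \<Longrightarrow> c \<in> C \<Longrightarrow> olt \<alpha> c \<Longrightarrow> (nxt \<alpha>, c) \<in> omega1"
  using someI_ex[OF nxt_ex] unfolding nxt_def by blast+

lemma gp: "\<alpha> \<in> C0 \<Longrightarrow> good_pair (Af \<alpha>) (Af (nxt \<alpha>))"
proof -
  assume a: "\<alpha> \<in> C0"
  have af: "\<alpha> \<in> Field omega1" using a C0_Field by blast
  have "\<forall>R\<in>fsets (Af (nxt \<alpha>)). \<forall>x\<in>Af (nxt \<alpha>). Phi (Af \<alpha>) R x \<in> Af (nxt \<alpha>)"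
    using Af_closed nxt(2)[OF af] by blast
  thus ?thesis unfolding good_pair_def using good0[OF a] Af_V by blast
qed

definition FA :: "nat set \<Rightarrow> 'a set set" where
  "FA \<alpha> = Fa (Af \<alpha>) (Af (nxt \<alpha>))"

definition Fs :: "'a set set" where
  "Fs = (\<Union>\<alpha>\<in>C0. FA \<alpha>)"

lemma sep: "\<alpha> \<in> C0 \<Longrightarrow> \<alpha>' \<in> C0 \<Longrightarrow> olt \<alpha> \<alpha>' \<Longrightarrow> (nxt \<alpha>, \<alpha>') \<in> omega1"
proof -
  assume a: "\<alpha> \<in> C0" and a': "\<alpha>' \<in> C0" and lt: "olt \<alpha> \<alpha>'"
  have "\<alpha>' \<noteq> z0" using lt z0(2) by blast
  hence "\<alpha>' \<in> C" using a' unfolding C0_def by blast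
  thus ?thesis using nxt(3) a C0_Field lt by blast
qed

lemma FA_T: "\<alpha> \<in> C0 \<Longrightarrow> e \<in> FA \<alpha> \<Longrightarrow> e \<subseteq> Af (nxt \<alpha>)"
  unfolding FA_def using Fa_T gp by blast

lemma FA_Es: "\<alpha> \<in> C0 \<Longrightarrow> FA \<alpha> \<subseteq> Es (Af \<alpha>)"
  unfolding FA_def using Fa_sub gp by blast

lemma disj_lt: "\<alpha> \<in> C0 \<Longrightarrow> \<alpha>' \<in> C0 \<Longrightarrow> olt \<alpha> \<alpha>' \<Longrightarrow> e \<in> FA \<alpha> \<Longrightarrow> e \<notin> FA \<alpha>'"
proof
  assume a: "\<alpha> \<in> C0" and a': "\<alpha>' \<in> C0" and lt: "olt \<alpha> \<alpha>'" and e: "e \<in> FA \<alpha>" and e': "e \<in> FA \<alpha>'"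
  have "e \<subseteq> Af (nxt \<alpha>)" using FA_T[OF a e] .
  also have "\<dots> \<subseteq> Af \<alpha>'" using Af_mono sep[OF a a' lt] by blast
  finally have "e \<subseteq> Af \<alpha>'" .
  moreover have "e \<in> Es (Af \<alpha>')" using FA_Es[OF a'] e' by blast
  ultimately show False using Es_out by blast
qed

lemma disj: "\<alpha> \<in> C0 \<Longrightarrow> \<alpha>' \<in> C0 \<Longrightarrow> e \<in> FA \<alpha> \<Longrightarrow> e \<in> FA \<alpha>' \<Longrightarrow> \<alpha> = \<alpha>'"
proof (rule ccontr)
  assume a: "\<alpha> \<in> C0" and a': "\<alpha>' \<in> C0" and e: "e \<in> FA \<alpha>" and e': "e \<in> FA \<alpha>'" and ne: "\<alpha> \<noteq> \<alpha>'"
  have "olt \<alpha> \<alpha>' \<or> olt \<alpha>' \<alpha>" using olt_linear a a' C0_Field ne by blast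
  thus False using disj_lt a a' e e' by blast
qed

end



context ctx2 begin

lemma locate:
  assumes x: "x \<in> V"
  shows "\<exists>\<alpha>\<in>C0. x \<in> Af (nxt \<alpha>) \<and> x \<notin> Af \<alpha>"
proof -
  have "x \<in> (\<Union>a\<in>Field omega1. Af a)" using x Af_cover by blast
  then obtain b where b: "b \<in> Field omega1" "x \<in> Af b" by blast
  hence "x \<in> \<Union> (NN Af ` {a. olt a b})" using Af_eq[of b] by simp
  then obtain a0 where a0: "olt a0 b" "x \<in> NN Af a0" by blast
  have a0in: "a0 \<in> {a. olt a b \<and> x \<in> NN Af a}" using a0 by simp
  obtain a where a: "olt a b" "x \<in> NN Af a" "\<And>y. olt y a \<Longrightarrow> x \<notin> NN Af y"
  proof (rule wfE_min[OF wf_olt a0in])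
    fix z assume z: "z \<in> {a. olt a b \<and> x \<in> NN Af a}"
      and m: "\<And>y. (y, z) \<in> {(a, b). olt a b} \<Longrightarrow> y \<notin> {a. olt a b \<and> x \<in> NN Af a}"
    have "\<And>y. olt y z \<Longrightarrow> x \<notin> NN Af y"
    proof -
      fix y assume y: "olt y z"
      hence "olt y b" using z olt_trans by blast
      thus "x \<notin> NN Af y" using m y by blast
    qed
    thus thesis using that z by blast
  qed
  have xa: "x \<notin> Af a"
  proof
    assume "x \<in> Af a"
    hence "x \<in> \<Union> (NN Af ` {y. olt y a})" using Af_eq[of a] by simp
    thus False using a(3) by blast
  qed
  have aF: "a \<in> Field omega1" using olt_Field a(1) by blast
  define D where "D = {c \<in> C0. (c, a) \<in> omega1}"
  define U where "U = {u \<in> Field omega1. \<forall>c\<in>D. (c, u) \<in> omega1}"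
  have z0D: "z0 \<in> D" unfolding D_def C0_def using z0_le[OF aF] by simp
  have aU: "a \<in> U" unfolding U_def D_def using aF by blast
  obtain s where s: "s \<in> U" "\<And>y. olt y s \<Longrightarrow> y \<notin> U"
  proof (rule wfE_min[OF wf_olt aU])
    fix z assume "z \<in> U" "\<And>y. (y, z) \<in> {(a, b). olt a b} \<Longrightarrow> y \<notin> U"
    thus thesis using that by blast
  qed
  have sF: "s \<in> Field omega1" using s(1) unfolding U_def by simp
  have sa: "(s, a) \<in> omega1"
  proof -
    have "\<not> olt a s" using s(2) aU by blast
    hence "olt s a \<or> s = a" using olt_linear[OF sF aF] by blast
    thus ?thesis using ole_iff sF by blast
  qed
  have sC0: "s \<in> C0"
  proof (rule ccontr)
    assume ns: "s \<notin> C0"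
    have cof: "\<And>a'. olt a' s \<Longrightarrow> \<exists>c\<in>C. olt a' c \<and> olt c s"
    proof -
      fix a' assume a': "olt a' s"
      have a'F: "a' \<in> Field omega1" using olt_Field a' by blast
      have "a' \<notin> U" using s(2) a' by blast
      then obtain c where c: "c \<in> D" "(c, a') \<notin> omega1" unfolding U_def using a'F by blast
      have cC0: "c \<in> C0" and ca: "(c, a) \<in> omega1" using c(1) unfolding D_def by simp_all
      have cF: "c \<in> Field omega1" using cC0 C0_Field by blast
      have "\<not> (olt c a' \<or> c = a')" using c(2) ole_iff a'F by blast
      hence ac: "olt a' c" using olt_linear[OF cF a'F] by blast
      have "(c, s) \<in> omega1" using s(1) c(1) unfolding U_def by blast
      moreover have "c \<noteq> s" using cC0 ns by blast
      ultimately have cs: "olt c s" unfolding olt_def by simp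
      have "c \<noteq> z0" using ac z0(2) by blast
      hence "c \<in> C" using cC0 unfolding C0_def by blast
      thus "\<exists>c\<in>C. olt a' c \<and> olt c s" using ac cs by blast
    qed
    have "(z0, s) \<in> omega1" using s(1) z0D unfolding U_def by blast
    moreover have "z0 \<noteq> s" using ns unfolding C0_def by blast
    ultimately have "olt z0 s" unfolding olt_def by simp
    hence lim: "is_limit s"
      unfolding is_limit_def using sF cof by blast
    have "s \<in> C" using C_closed[OF lim] cof by blast
    thus False using ns unfolding C0_def by blast
  qed
  have xs: "x \<notin> Af s" using Af_mono[OF sa] xa by blast
  have nF: "nxt s \<in> C" "olt s (nxt s)" using nxt sF by blast+
  have anx: "olt a (nxt s)"
  proof (rule ccontr)
    assume na: "\<not> olt a (nxt s)"
    have nF': "nxt s \<in> Field omega1" using nF(1) C_Field by blast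
    have "olt (nxt s) a \<or> nxt s = a" using olt_linear[OF nF' aF] na by blast
    hence "(nxt s, a) \<in> omega1" using ole_iff nF' by blast
    hence "nxt s \<in> D" unfolding D_def C0_def using nF(1) by blast
    hence "(nxt s, s) \<in> omega1" using s(1) unfolding U_def by blast
    hence "olt (nxt s) s \<or> nxt s = s" using ole_iff by blast
    thus False
    proof
      assume "olt (nxt s) s" thus False using olt_asym[OF nF(2)] by simp
    next
      assume e: "nxt s = s"
      have "olt s s" using nF(2) unfolding e .
      thus False using olt_irrefl by simp
    qed
  qed
  have "x \<in> Af (nxt s)" using NN_Af[OF anx] a(2) by blast
  thus ?thesis using sC0 xs by blast
qed

lemma only_one:
  assumes a: "\<alpha> \<in> C0" and x: "x \<in> Af (nxt \<alpha>)" "x \<notin> Af \<alpha>" and fx: "f x \<noteq> CAleph1"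
  shows "inc Fs x = inc (FA \<alpha>) x"
proof
  show "inc (FA \<alpha>) x \<subseteq> inc Fs x" unfolding Fs_def inc_def using a by blast
next
  show "inc Fs x \<subseteq> inc (FA \<alpha>) x"
  proof
    fix e assume "e \<in> inc Fs x"
    then obtain a' where a': "a' \<in> C0" "e \<in> FA a'" and xe: "x \<in> e" unfolding Fs_def inc_def by blast
    have "a' = \<alpha>"
    proof (rule ccontr)
      assume ne: "a' \<noteq> \<alpha>"
      have "olt a' \<alpha> \<or> olt \<alpha> a'" using olt_linear a a'(1) C0_Field ne by blast
      thus False
      proof
        assume lt: "olt a' \<alpha>"
        have "e \<subseteq> Af (nxt a')" using FA_T a' by blast
        also have "\<dots> \<subseteq> Af \<alpha>" using Af_mono sep[OF a'(1) a lt] by blast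
        finally show False using xe x(2) by blast
      next
        assume lt: "olt \<alpha> a'"
        have "x \<in> Af a'" using Af_mono[OF sep[OF a a'(1) lt]] x(1) by blast
        moreover have "e \<in> Es (Af a')" using FA_Es a' by blast
        ultimately show False using Es_avoid fx xe by blast
      qed
    qed
    thus "e \<in> inc (FA \<alpha>) x" using a' xe unfolding inc_def by blast
  qed
qed

lemma countable_FA: "\<alpha> \<in> C0 \<Longrightarrow> countable (FA \<alpha>)"
  unfolding FA_def using Fa_countable gp by blast

lemma Fs_E: "Fs \<subseteq> E"
  unfolding Fs_def using FA_Es unfolding Es_def by blast

lemma vertex_small:
  assumes x: "x \<in> V" and fx: "f x \<noteq> CAleph1"
  shows "cv_eq (f x) (inc Fs x) \<and> cv_ge (f x) (inc Fs x)"
proof -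
  obtain \<alpha> where a: "\<alpha> \<in> C0" "x \<in> Af (nxt \<alpha>)" "x \<notin> Af \<alpha>" using locate[OF x] by blast
  have eq: "inc Fs x = inc (FA \<alpha>) x" using only_one a fx by blast
  have q: "x \<in> Qs (Af \<alpha>) (Af (nxt \<alpha>))" unfolding Qs_def using a by blast
  have fsx: "fs (Af \<alpha>) x = f x" unfolding fs_def Vs_def using a x by simp
  have g: "good_pair (Af \<alpha>) (Af (nxt \<alpha>))" using gp a(1) .
  have cT: "countable (Af (nxt \<alpha>))" by (rule Af_countable)
  show ?thesis
  proof (cases "f x")
    case (CFin k)
    have "finite (inc (FA \<alpha>) x) \<and> card (inc (FA \<alpha>) x) = k"
      unfolding FA_def using Fa_finite_vertex[OF g cT q] fsx CFin by simp
    thus ?thesis unfolding eq cv_eq_def cv_ge_def using CFin by simp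
  next
    case CAleph0
    have "infinite (inc (FA \<alpha>) x)"
      unfolding FA_def using Fa_inf_vertex[OF g cT q] fsx CAleph0 by simp
    moreover have "countable (inc (FA \<alpha>) x)"
      using countable_FA[OF a(1)] unfolding inc_def by (rule countable_subset[rotated]) auto
    ultimately show ?thesis unfolding eq cv_eq_def cv_ge_def using CAleph0 by simp
  next
    case CAleph1 thus ?thesis using fx by simp
  qed
qed

lemma C_uncountable: "uncountable C"
proof
  assume cC: "countable C"
  have "Field omega1 \<subseteq> (\<Union>c\<in>C. {a. olt a c})" using C_unb by blast
  moreover have "countable (\<Union>c\<in>C. {a. olt a c})" using cC countable_underS by blast
  ultimately show False using uncountable_Field countable_subset by blast
qed

lemma vertex_big:
  assumes x: "x \<in> V" and fx: "f x = CAleph1"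
  shows "cv_eq (f x) (inc Fs x) \<and> cv_ge (f x) (inc Fs x)"
proof -
  have "x \<in> (\<Union>a\<in>Field omega1. Af a)" using x Af_cover by blast
  then obtain b where b: "b \<in> Field omega1" "x \<in> Af b" by blast
  define I where "I = {\<alpha> \<in> C. (b, \<alpha>) \<in> omega1}"
  have "C \<subseteq> I \<union> {c. olt c b}"
  proof
    fix c assume c: "c \<in> C"
    have cF: "c \<in> Field omega1" using c C_Field by blast
    have "olt b c \<or> b = c \<or> olt c b" using olt_linear[OF b(1) cF] .
    thus "c \<in> I \<union> {c. olt c b}"
    proof (elim disjE)
      assume "olt b c" hence "(b, c) \<in> omega1" unfolding olt_def by simp
      thus ?thesis unfolding I_def using c by simp
    next
      assume "b = c" hence "(b, c) \<in> omega1" using ole_iff cF by simp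
      thus ?thesis unfolding I_def using c by simp
    next
      assume "olt c b" thus ?thesis by simp
    qed
  qed
  moreover have "uncountable C" by (rule C_uncountable)
  ultimately have uI: "uncountable I"
  proof -
    assume s: "C \<subseteq> I \<union> {c. olt c b}" and uC: "uncountable C"
    show "uncountable I"
    proof
      assume "countable I"
      hence "countable (I \<union> {c. olt c b})" using countable_underS by simp
      with s have "countable C" by (rule countable_subset)
      thus False using uC by simp
    qed
  qed
  have IC0: "I \<subseteq> C0" unfolding I_def C0_def by blast
  have ex: "\<And>\<alpha>. \<alpha> \<in> I \<Longrightarrow> \<exists>e\<in>FA \<alpha>. x \<in> e"
  proof -
    fix \<alpha> assume aI: "\<alpha> \<in> I"
    have aC0: "\<alpha> \<in> C0" using aI IC0 by (rule subsetD[rotated])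
    have aF: "\<alpha> \<in> Field omega1" using aC0 C0_Field by (rule subsetD[rotated])
    have ba: "(b, \<alpha>) \<in> omega1" using aI unfolding I_def by simp
    have x1: "x \<in> Af \<alpha>" using Af_mono[OF ba] b(2) by (rule subsetD)
    have "(\<alpha>, nxt \<alpha>) \<in> omega1" using nxt(2)[OF aF] unfolding olt_def by simp
    hence xT: "x \<in> Af (nxt \<alpha>)" using Af_mono x1 by (rule_tac subsetD) auto
    have q: "x \<in> Qs (Af \<alpha>) (Af (nxt \<alpha>))" unfolding Qs_def using xT fx by simp
    have fsx: "fs (Af \<alpha>) x = CAleph1" unfolding fs_def Vs_def using x fx by simp
    show "\<exists>e\<in>FA \<alpha>. x \<in> e" unfolding FA_def
      using Fa_aleph1_vertex[OF gp[OF aC0] Af_countable q fsx] .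
  qed
  define \<epsilon> where "\<epsilon> = (\<lambda>\<alpha>. SOME e. e \<in> FA \<alpha> \<and> x \<in> e)"
  have eps: "\<And>\<alpha>. \<alpha> \<in> I \<Longrightarrow> \<epsilon> \<alpha> \<in> FA \<alpha> \<and> x \<in> \<epsilon> \<alpha>"
  proof -
    fix \<alpha> assume "\<alpha> \<in> I"
    hence "\<exists>e. e \<in> FA \<alpha> \<and> x \<in> e" using ex by blast
    thus "\<epsilon> \<alpha> \<in> FA \<alpha> \<and> x \<in> \<epsilon> \<alpha>" unfolding \<epsilon>_def by (rule someI_ex)
  qed
  have inj: "inj_on \<epsilon> I"
  proof (rule inj_onI)
    fix a1 a2 assume a1: "a1 \<in> I" and a2: "a2 \<in> I" and eq: "\<epsilon> a1 = \<epsilon> a2"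
    have e1: "\<epsilon> a1 \<in> FA a1" using eps[OF a1] by simp
    have e2: "\<epsilon> a1 \<in> FA a2" using eps[OF a2] eq by simp
    have "a1 \<in> C0" "a2 \<in> C0" using a1 a2 IC0 by auto
    thus "a1 = a2" using disj e1 e2 by blast
  qed
  have sub: "\<epsilon> ` I \<subseteq> inc Fs x"
  proof
    fix e assume "e \<in> \<epsilon> ` I"
    then obtain \<alpha> where a: "\<alpha> \<in> I" "e = \<epsilon> \<alpha>" by blast
    have "\<alpha> \<in> C0" using a(1) IC0 by auto
    moreover have "e \<in> FA \<alpha>" "x \<in> e" using eps[OF a(1)] a(2) by simp_all
    ultimately show "e \<in> inc Fs x" unfolding Fs_def inc_def by blast
  qed
  have "uncountable (\<epsilon> ` I)"
  proof
    assume "countable (\<epsilon> ` I)"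
    hence "countable I" using inj by (rule countable_image_inj_on)
    thus False using uI by simp
  qed
  hence uinc: "uncountable (inc Fs x)"
  proof -
    assume u: "uncountable (\<epsilon> ` I)"
    show ?thesis
    proof
      assume "countable (inc Fs x)"
      hence "countable (\<epsilon> ` I)" using sub by (rule countable_subset[rotated])
      thus False using u by simp
    qed
  qed
  have "inc Fs x \<subseteq> E" using Fs_E unfolding inc_def by blast
  hence iso: "|inc Fs x| =o omega1" using uinc by (rule uncountable_iso)
  hence "|inc Fs x| \<le>o omega1" using ordIso_iff_ordLeq by blast
  thus ?thesis unfolding cv_eq_def cv_ge_def using fx iso by simp
qed

lemma perfect: "perfect_f_factor V E f Fs"
proof -
  have all: "\<And>x. x \<in> V \<Longrightarrow> cv_eq (f x) (inc Fs x) \<and> cv_ge (f x) (inc Fs x)"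
  proof -
    fix x assume x: "x \<in> V"
    show "cv_eq (f x) (inc Fs x) \<and> cv_ge (f x) (inc Fs x)"
    proof (cases "f x = CAleph1")
      case True thus ?thesis using vertex_big x by blast
    next
      case False thus ?thesis using vertex_small x by blast
    qed
  qed
  show ?thesis unfolding perfect_f_factor_def f_factor_def using Fs_E all by blast
qed

end

theorem theorem2:
  fixes V :: "'a set" and E :: "'a set set" and f :: "'a \<Rightarrow> cval"
    and P :: "'a set \<Rightarrow> 'a set set \<Rightarrow> ('a \<Rightarrow> cval) \<Rightarrow> bool"
  assumes "inC V E f"
    and "(card_of V, omega1) \<in> ordIso"
    and "hereditary P"
    and "holds P V E f"
    and "\<not> destructed P V E f"
  shows "\<exists>F. perfect_f_factor V E f F"
proof -
  interpret ctx V E f P using assms(1-4) by (unfold_locales) simp_all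
  have "\<not> destruction P V E f Af" using assms(5) unfolding destructed_def by blast
  hence ns: "\<not> stationary {a \<in> Field omega1. \<not> holds P (V_al V f Af a) (E_al V E f Af a) (f_al V f Af a)}"
    using Af_filtration unfolding destruction_def by blast
  obtain C where C: "club C"
    and dis: "{a \<in> Field omega1. \<not> holds P (V_al V f Af a) (E_al V E f Af a) (f_al V f Af a)} \<inter> C = {}"
    using ns unfolding stationary_def by blast
  have good: "\<And>c. c \<in> C \<Longrightarrow> holds P (Vs (Af c)) (Es (Af c)) (fs (Af c))"
  proof -
    fix c assume c: "c \<in> C"
    have "c \<in> Field omega1" using C c unfolding club_def by blast
    hence "holds P (V_al V f Af c) (E_al V E f Af c) (f_al V f Af c)" using dis c by blast
    thus "holds P (Vs (Af c)) (Es (Af c)) (fs (Af c))" unfolding al_eq .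
  qed
  interpret ctx2 V E f P C using C good by (unfold_locales) simp_all
  show ?thesis using perfect by blast
qed

end
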